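(* Let $m,n$ be positive integers and $x>2$ real. Define $\alpha_j>0$ ($1\le j\le 2n-1$) and $\beta_k>0$ ($1\le k\le 2m-1$) by $$\cosh\alpha_j+\cos\frac{\pi j}{2n}=x=\cosh\beta_k+\cos\frac{\pi k}{2m}.$$ Then $$\prod_{j=1}^{2n-1}\left(\frac{\tanh(m\alpha_j)}{\sinh\alpha_j}\right)^{(-1)^j}=\prod_{k=1}^{2m-1}\left(\frac{\tanh(n\beta_k)}{\sinh\beta_k}\right)^{(-1)^k}.$$ *)

theory Defs
  imports "HOL-Analysis.Analysis"
begin

end

theory Submission imports Defs "HOL-Computational_Algebra.Fundamental_Theorem_Algebra" begin
lemma roots_unity_prod:
  fixes w :: complex assumes N: "N > 0"
  shows "w ^ N - 1 = (\<Prod>u\<in>{u. u ^ N = 1}. w - u)"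
proof -
  define p :: "complex poly" where "p = monom 1 N + [:-1:]"
  have pv: "poly p z = z ^ N - 1" for z by (simp add: p_def poly_monom)
  have dp: "poly (pderiv p) z = of_nat N * z ^ (N - 1)" for z
    by (simp add: p_def pderiv_add pderiv_monom poly_monom)
  have deg: "degree p = N" using N unfolding p_def
    by (subst degree_add_eq_left) (auto simp: degree_monom_eq)
  have lc: "lead_coeff p = 1" using deg N by (cases N) (simp_all add: p_def)
  have rs: "rsquarefree p"
    unfolding rsquarefree_roots
  proof (intro allI notI)
    fix a assume "poly p a = 0 \<and> poly (pderiv p) a = 0"
    then have "a ^ N = 1" "of_nat N * a ^ (N - 1) = 0" using pv dp by auto
    moreover have "(of_nat N::complex) \<noteq> 0" using N by simp
    ultimately have "a = 0" by simp
    then show False using N \<open>a ^ N = 1\<close> by (simp add: power_0_left)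
  qed
  have "smult (lead_coeff p) (\<Prod>z|poly p z = 0. [:-z, 1:]) = p"
    by (rule complex_poly_decompose_rsquarefree[OF rs])
  then have "poly p w = poly (smult (lead_coeff p) (\<Prod>z|poly p z = 0. [:-z, 1:])) w" by simp
  then have "poly p w = (\<Prod>z|poly p z = 0. w - z)" using lc by (simp add: poly_prod)
  then show ?thesis using pv by simp
qed
lemma prod_split_2N:
  fixes g :: "nat \<Rightarrow> 'a::comm_monoid_mult" assumes N: "N > 0"
  shows "(\<Prod>k<2*N. g k) = g 0 * g N * (\<Prod>k\<in>{1..<N}. g k * g (2*N - k))"
proof -
  have eq: "{..<2*N} = insert 0 (insert N ({1..<N} \<union> (\<lambda>k. 2*N-k)`{1..<N}))"
  proof (intro equalityI subsetI)
    fix x assume x: "x \<in> {..<2*N}"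
    show "x \<in> insert 0 (insert N ({1..<N} \<union> (\<lambda>k. 2*N-k)`{1..<N}))"
    proof (cases "x \<le> N")
      case True then show ?thesis by auto
    next
      case False
      then have "x = 2*N - (2*N - x)" "2*N - x \<in> {1..<N}" using x by auto
      then show ?thesis by blast
    qed
  qed (use N in auto)
  have inj: "inj_on (\<lambda>k. 2*N-k) {1..<N}" by (auto simp: inj_on_def)
  have "(\<Prod>k<2*N. g k) = g 0 * (g N * ((\<Prod>k\<in>{1..<N}. g k) * (\<Prod>k\<in>(\<lambda>k. 2*N-k)`{1..<N}. g k)))"
    unfolding eq by (subst prod.insert; auto simp: N)+ (subst prod.union_disjoint; auto simp: N)
  also have "(\<Prod>k\<in>(\<lambda>k. 2*N-k)`{1..<N}. g k) = (\<Prod>k\<in>{1..<N}. g (2*N-k))"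
    using inj by (simp add: prod.reindex)
  finally show ?thesis by (simp add: prod.distrib mult_ac)
qed

lemma cheb_real:
  fixes z :: real assumes N: "N > 0"
  shows "z ^ (2*N) - 1 = (z^2 - 1) * (\<Prod>k\<in>{1..<N}. z^2 - 2*z*cos (pi * real k / real N) + 1)"
proof -
  define w where "w = complex_of_real z"
  define g where "g k = w - cis (2 * pi * real k / real (2*N))" for k
  have "w ^ (2*N) - 1 = (\<Prod>u\<in>{u. u ^ (2*N) = 1}. w - u)"
    using N by (intro roots_unity_prod) simp
  also have "\<dots> = (\<Prod>k<2*N. g k)"
  proof -
    have bij: "bij_betw (\<lambda>k. cis (2*pi*real k / real (2*N))) {..<2*N} {u. u^(2*N)=1}"
      using N by (intro Complex.bij_betw_roots_unity) simp
    show ?thesis unfolding g_def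
      by (rule sym, rule prod.reindex_bij_betw[OF bij])
  qed
  also have "\<dots> = g 0 * g N * (\<Prod>k\<in>{1..<N}. g k * g (2*N - k))"
    using N by (rule prod_split_2N)
  also have "g 0 * g N = of_real (z^2 - 1)"
    using N by (simp add: g_def w_def complex_eq_iff power2_eq_square algebra_simps)
  also have "(\<Prod>k\<in>{1..<N}. g k * g (2*N - k)) =
       (\<Prod>k\<in>{1..<N}. of_real (z^2 - 2*z*cos (pi * real k / real N) + 1))"
  proof (intro prod.cong refl)
    fix k assume k: "k \<in> {1..<N}"
    define c where "c = cis (pi * real k / real N)"
    have gk: "g k = w - c" using N by (simp add: g_def c_def)
    have "2 * pi * real (2*N - k) / real (2*N) = 2*pi - pi * real k / real N"
      using k N by (simp add: of_nat_diff field_simps)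
    then have g2: "g (2*N-k) = w - cnj c"
      by (simp add: g_def c_def cis_cnj complex_eq_iff cos_diff sin_diff)
    show "g k * g (2*N - k) = of_real (z^2 - 2*z*cos (pi * real k / real N) + 1)"
      unfolding gk g2 by (simp add: c_def w_def complex_eq_iff power2_eq_square algebra_simps
          sin_squared_eq)
  qed
  finally have "w ^ (2*N) - 1 = of_real ((z^2 - 1) * (\<Prod>k\<in>{1..<N}. z^2 - 2*z*cos (pi * real k / real N) + 1))"
    by simp
  then show ?thesis unfolding w_def
    by (metis of_real_1 of_real_diff of_real_eq_iff of_real_power)
qed
lemma prod_split_parity:
  fixes h :: "nat \<Rightarrow> 'a::comm_monoid_mult"
  shows "(\<Prod>k\<in>{1..<2*M}. h k) = (\<Prod>l\<in>{1..<M}. h (2*l)) * (\<Prod>l<M. h (2*l+1))"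
proof -
  have eq: "{1..<2*M} = (\<lambda>l. 2*l)`{1..<M} \<union> (\<lambda>l. 2*l+1)`{..<M}"
  proof (intro equalityI subsetI)
    fix x assume x: "x \<in> {1..<2*M}"
    show "x \<in> (\<lambda>l. 2*l)`{1..<M} \<union> (\<lambda>l. 2*l+1)`{..<M}"
    proof (cases "even x")
      case True
      then have "x = 2 * (x div 2)" "x div 2 \<in> {1..<M}" using x by auto
      then show ?thesis by blast
    next
      case False
      then have "x = 2 * (x div 2) + 1" "x div 2 \<in> {..<M}" using x by (presburger, auto)
      then show ?thesis by blast
    qed
  qed auto
  have d: "(\<lambda>l. 2*l)`{1..<M} \<inter> (\<lambda>l. 2*l+1)`{..<M} = {}" by auto (metis even_Suc even_mult_iff even_numeral)
  show ?thesis unfolding eq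
    by (subst prod.union_disjoint[OF _ _ d]) (auto simp: prod.reindex inj_on_def)
qed

lemma key:
  fixes a :: real and M :: nat assumes a: "a > 0" and M: "M > 0"
  shows "tanh (real M * a) / sinh a =
    (\<Prod>k=1..2*M-1. (cosh a - cos (pi * real k / (2 * real M))) powi ((-1) ^ k))"
proof -
  define z where "z = exp a"
  have z1: "z > 1" using a by (simp add: z_def)
  define q where "q k = z^2 - 2*z*cos (pi * real k / (2 * real M)) + 1" for k
  have ch: "cosh a - cos (pi * real k / (2 * real M)) = q k / (2*z)" for k
    using z1 by (simp add: q_def z_def cosh_def exp_minus field_simps power2_eq_square)
  define E where "E = (\<Prod>l\<in>{1..<M}. q (2*l))"
  define Od where "Od = (\<Prod>l<M. q (2*l+1))"
  have T: "z ^ (2*(2*M)) - 1 = (z^2 - 1) * (E * Od)"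
  proof -
    have "z ^ (2*(2*M)) - 1 = (z^2 - 1) * (\<Prod>k\<in>{1..<2*M}. q k)"
      using M cheb_real[of "2*M" z] by (simp add: q_def)
    also have "(\<Prod>k\<in>{1..<2*M}. q k) = E * Od"
      unfolding E_def Od_def by (rule prod_split_parity)
    finally show ?thesis .
  qed
  have Ee: "z ^ (2*M) - 1 = (z^2 - 1) * E"
    using M cheb_real[of M z] unfolding E_def q_def by simp
  have zM: "z ^ (2*M) > 1" using z1 M by simp
  have fac: "z ^ (2*(2*M)) - 1 = (z ^ (2*M) - 1) * (z ^ (2*M) + 1)"
  proof -
    have "z^(2*(2*M)) = (z^(2*M))^2" by (metis mult.commute power_mult)
    then show ?thesis by (simp add: power2_eq_square algebra_simps)
  qed
  have Enz: "(z^2 - 1) * E \<noteq> 0" using Ee zM by (metis less_irrefl right_minus_eq)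
  have Oe: "Od = z ^ (2*M) + 1"
    using T fac Ee Enz by (metis mult.assoc mult_left_cancel)
  have "(\<Prod>k=1..2*M-1. (cosh a - cos (pi * real k / (2 * real M))) powi ((-1) ^ k))
      = (\<Prod>k\<in>{1..<2*M}. (q k / (2*z)) powi ((-1) ^ k))"
    using M by (intro prod.cong) (auto simp: ch)
  also have "\<dots> = (\<Prod>l\<in>{1..<M}. q (2*l) / (2*z)) * (\<Prod>l<M. inverse (q (2*l+1) / (2*z)))"
    by (subst prod_split_parity) (simp add: power_int_minus)
  also have "\<dots> = (E / (2*z)^(M-1)) * ((2*z)^M / Od)"
    by (simp add: E_def Od_def prod_dividef prod_inversef)
  also have "\<dots> = 2*z * E / Od"
    using M z1 by (cases M) (auto simp: field_simps)
  also have "\<dots> = tanh (real M * a) / sinh a"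
  proof -
    have e: "exp (real M * a) = z ^ M" by (simp add: z_def exp_of_nat_mult)
    have y: "z^M > 0" using z1 by simp
    have "tanh (real M * a) = ((z^M)^2 - 1) / ((z^M)^2 + 1)"
    proof -
      have gen: "(2*y - 2/y)/(2*y+2/y) = (y*y-1)/(1+y*y)" if "y>0" for y::real
      proof -
        have "y*y+1 > 0" by (metis add_pos_nonneg zero_less_one zero_le_square add.commute)
        have a: "2*y - 2/y = 2*(y*y-1)/y" using that by (simp add: field_simps)
        have b: "2*y + 2/y = 2*(y*y+1)/y" using that by (simp add: field_simps)
        have "(2*(y*y-1)/y)/(2*(y*y+1)/y) = (2*(y*y-1))/(2*(y*y+1))" using that by simp
        also have "\<dots> = (y*y-1)/(y*y+1)" by (rule mult_divide_mult_cancel_left) simp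
        finally show ?thesis unfolding a b by (simp add: add.commute)
      qed
      show ?thesis unfolding tanh_def sinh_def cosh_def exp_minus e using y
        by (simp add: field_simps power2_eq_square gen)
    qed
    also have "(z^M)^2 = z^(2*M)" by (metis mult.commute power_mult)
    finally have "tanh (real M * a) = (z^(2*M) - 1) / (z^(2*M) + 1)" .
    moreover have "sinh a = (z^2 - 1) / (2*z)"
      unfolding sinh_def exp_minus z_def[symmetric] using z1 by (simp add: field_simps power2_eq_square)
    moreover have "E = (z^(2*M) - 1) / (z^2 - 1)" using Ee Enz by (simp add: field_simps)
    moreover have gen: "2*z*((Z-1)/(w-1))/(Z+1) = ((Z-1)/(Z+1))/((w-1)/(2*z))"
      if "Z > 1" "w > 1" for Z w :: real using that z1 by (simp add: field_simps)
    moreover have "z^2 > 1" using z1 by (simp add: one_less_power)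
    ultimately show ?thesis using Oe zM by simp
  qed
  finally show ?thesis ..
qed


lemma powi_prod: "finite A \<Longrightarrow> (\<Prod>i\<in>A. f i) powi e = (\<Prod>i\<in>A. (f i :: real) powi e)"
  by (induct rule: finite_induct) (simp_all add: power_int_mult_distrib)

lemma side:
  fixes m n :: nat and x :: real and \<alpha> :: "nat \<Rightarrow> real"
  assumes "m > 0" and "n > 0"
    and "\<And>j. 1 \<le> j \<Longrightarrow> j \<le> 2*n - 1 \<Longrightarrow>
           \<alpha> j > 0 \<and> cosh (\<alpha> j) + cos (pi * real j / (2 * real n)) = x"
  shows "(\<Prod>j=1..2*n-1. (tanh (real m * \<alpha> j) / sinh (\<alpha> j)) powi ((-1) ^ j))
       = (\<Prod>j=1..2*n-1. \<Prod>k=1..2*m-1. (x - cos (pi * real j / (2 * real n)) - cos (pi * real k / (2 * real m)))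
            powi ((-1) ^ k * (-1) ^ j))"
proof (intro prod.cong refl)
  fix j assume j: "j \<in> {1..2*n-1}"
  then have h: "\<alpha> j > 0" "cosh (\<alpha> j) = x - cos (pi * real j / (2 * real n))"
    using assms(3)[of j] by auto
  show "(tanh (real m * \<alpha> j) / sinh (\<alpha> j)) powi ((-1) ^ j) =
    (\<Prod>k=1..2*m-1. (x - cos (pi * real j / (2 * real n)) - cos (pi * real k / (2 * real m)))
            powi ((-1) ^ k * (-1) ^ j))"
    unfolding key[OF h(1) assms(1)] h(2) by (simp add: powi_prod power_int_mult)
qed

theorem mainTheorem14:
  fixes m n :: nat and x :: real and \<alpha> \<beta> :: "nat \<Rightarrow> real"
  assumes "m > 0" and "n > 0" and "x > 2"
    and "\<And>j. 1 \<le> j \<Longrightarrow> j \<le> 2*n - 1 \<Longrightarrow>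
           \<alpha> j > 0 \<and> cosh (\<alpha> j) + cos (pi * real j / (2 * real n)) = x"
    and "\<And>k. 1 \<le> k \<Longrightarrow> k \<le> 2*m - 1 \<Longrightarrow>
           \<beta> k > 0 \<and> cosh (\<beta> k) + cos (pi * real k / (2 * real m)) = x"
  shows "(\<Prod>j=1..2*n-1. (tanh (real m * \<alpha> j) / sinh (\<alpha> j)) powi ((-1) ^ j))
       = (\<Prod>k=1..2*m-1. (tanh (real n * \<beta> k) / sinh (\<beta> k)) powi ((-1) ^ k))"
proof -
  show ?thesis
    apply (rule trans[OF side[of m n \<alpha> x]])
       apply (use assms in auto)[3]
    apply (rule trans[OF _ side[of n m \<beta> x, symmetric]])
       apply (use assms in auto)[3]
    apply (subst prod.swap)
    apply (intro prod.cong refl)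
    apply (simp add: algebra_simps)
    using assms by auto
qed

end
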